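(* Consider a finite super-modular game with player set $\mathcal V$ and binary action sets $\{\pm1\}$. Write $x\uparrow y$ ($x\downarrow y$) if $y$ is reachable from $x$ by a monotone (anti-monotone) I-path, and $x\to y$ if $y$ is reachable from $x$ by an I-path. Then for all $x,x',y,z\in\mathcal X$: (i) if $x\uparrow y$ and $x\uparrow z$, then $x\uparrow (y\vee z)$; (ii) if $x\downarrow y$ and $x\downarrow z$, then $x\downarrow(y\wedge z)$; (iii) if $x\uparrow y$ and $x'\ge x$, then $x'\uparrow(y\vee x')$; (iv) if $x\downarrow y$ and $x'\le x$, then $x'\downarrow(y\wedge x')$; (v) if $x\to y$, then there exist $y''\le y\le y'$ with $x\uparrow y'$ and $x\downarrow y''$. The same five statements hold with I-paths replaced throughout by BR-paths.
   Context: Game: finite player set $\mathcal V$, each player has action set $\{-1,+1\}$, configurations $x\in\mathcal X=\{-1,+1\}^{\mathcal V}$, utilities $u_i:\mathcal X\to\mathbb R$; write $u_i(x)=u_i(x_i,x_{-i})$. The game is super-modular if for every $i$, $u_i(1,x_{-i})-u_i(-1,x_{-i})\ge u_i(1,y_{-i})-u_i(-1,y_{-i})$ whenever $x_{-i}\ge y_{-i}$ (componentwise order). $x\vee y$, $x\wedge y$ are the entrywise max and min. Paths: a length-$l$ admissible path from $x$ to $y$ is $(x^{(0)},\dots,x^{(l)})$ with $x^{(0)}=x$, $x^{(l)}=y$, and for each $k=1,\dots,l$ a player $i_k$ with $x^{(k)}_{-i_k}=x^{(k-1)}_{-i_k}$ and $x^{(k)}_{i_k}\ne x^{(k-1)}_{i_k}$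 (length $0$ allowed). It is an I-path if $u_{i_k}(x^{(k)})>u_{i_k}(x^{(k-1)})$ for all $k$, a BR-path if $u_{i_k}(x^{(k)})\ge u_{i_k}(x^{(k-1)})$ for all $k$; monotone if $x^{(0)}\lneq x^{(1)}\lneq\cdots\lneq x^{(l)}$, anti-monotone if $x^{(0)}\gneq\cdots\gneq x^{(l)}$ (where $x\lneq y$ means $x\le y$, $x\neq y$). *)

theory Defs
  imports Complex_Main
begin

definition configs :: "('v \<Rightarrow> int) set" where
  "configs = {x. \<forall>i. x i \<in> {-1, 1}}"

definition supermodular :: "('v \<Rightarrow> ('v \<Rightarrow> int) \<Rightarrow> real) \<Rightarrow> bool" where
  "supermodular u \<longleftrightarrow>
     (\<forall>i. \<forall>x\<in>configs. \<forall>y\<in>configs. (\<forall>j. j \<noteq> i \<longrightarrow> y j \<le> x j) \<longrightarrow>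
        u i (x(i := 1)) - u i (x(i := -1)) \<ge> u i (y(i := 1)) - u i (y(i := -1)))"

definition unilateral :: "'v \<Rightarrow> ('v \<Rightarrow> int) \<Rightarrow> ('v \<Rightarrow> int) \<Rightarrow> bool" where
  "unilateral i x y \<longleftrightarrow> (\<forall>j. j \<noteq> i \<longrightarrow> y j = x j) \<and> y i \<noteq> x i"

definition I_path :: "('v \<Rightarrow> ('v \<Rightarrow> int) \<Rightarrow> real) \<Rightarrow> ('v \<Rightarrow> int) list \<Rightarrow> bool" where
  "I_path u xs \<longleftrightarrow> xs \<noteq> [] \<and> set xs \<subseteq> configs \<and>
     (\<forall>k. Suc k < length xs \<longrightarrow>
        (\<exists>i. unilateral i (xs ! k) (xs ! Suc k) \<and> u i (xs ! Suc k) > u i (xs ! k)))"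

definition BR_path :: "('v \<Rightarrow> ('v \<Rightarrow> int) \<Rightarrow> real) \<Rightarrow> ('v \<Rightarrow> int) list \<Rightarrow> bool" where
  "BR_path u xs \<longleftrightarrow> xs \<noteq> [] \<and> set xs \<subseteq> configs \<and>
     (\<forall>k. Suc k < length xs \<longrightarrow>
        (\<exists>i. unilateral i (xs ! k) (xs ! Suc k) \<and> u i (xs ! Suc k) \<ge> u i (xs ! k)))"

definition monotone_path :: "('v \<Rightarrow> int) list \<Rightarrow> bool" where
  "monotone_path xs \<longleftrightarrow> (\<forall>k. Suc k < length xs \<longrightarrow> xs ! k < xs ! Suc k)"

definition antimonotone_path :: "('v \<Rightarrow> int) list \<Rightarrow> bool" where
  "antimonotone_path xs \<longleftrightarrow> (\<forall>k. Suc k < length xs \<longrightarrow> xs ! k > xs ! Suc k)"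

definition reach :: "(('v \<Rightarrow> int) list \<Rightarrow> bool) \<Rightarrow> ('v \<Rightarrow> int) \<Rightarrow> ('v \<Rightarrow> int) \<Rightarrow> bool" where
  "reach P x y \<longleftrightarrow> (\<exists>xs. P xs \<and> hd xs = x \<and> last xs = y)"

definition reach_up :: "(('v \<Rightarrow> int) list \<Rightarrow> bool) \<Rightarrow> ('v \<Rightarrow> int) \<Rightarrow> ('v \<Rightarrow> int) \<Rightarrow> bool" where
  "reach_up P x y \<longleftrightarrow> (\<exists>xs. P xs \<and> monotone_path xs \<and> hd xs = x \<and> last xs = y)"

definition reach_down :: "(('v \<Rightarrow> int) list \<Rightarrow> bool) \<Rightarrow> ('v \<Rightarrow> int) \<Rightarrow> ('v \<Rightarrow> int) \<Rightarrow> bool" where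
  "reach_down P x y \<longleftrightarrow> (\<exists>xs. P xs \<and> antimonotone_path xs \<and> hd xs = x \<and> last xs = y)"

end

theory Submission imports Defs begin

definition gpath :: "('v \<Rightarrow> ('v \<Rightarrow> int) \<Rightarrow> real) \<Rightarrow> (real \<Rightarrow> real \<Rightarrow> bool) \<Rightarrow> ('v \<Rightarrow> int) list \<Rightarrow> bool" where
  "gpath u R xs \<longleftrightarrow> xs \<noteq> [] \<and> set xs \<subseteq> configs \<and>
     (\<forall>k. Suc k < length xs \<longrightarrow>
        (\<exists>i. unilateral i (xs ! k) (xs ! Suc k) \<and> R (u i (xs ! k)) (u i (xs ! Suc k))))"

lemma I_gpath: "I_path u = gpath u (<)"
  by (rule ext) (simp add: I_path_def gpath_def)
lemma BR_gpath: "BR_path u = gpath u (\<le>)"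
  by (rule ext) (simp add: BR_path_def gpath_def)

lemma gpath_single: "gpath u R [a] \<longleftrightarrow> a \<in> configs"
  by (simp add: gpath_def)

lemma steps_snoc:
  assumes "xs \<noteq> []"
  shows "(\<forall>k. Suc k < length (xs@[b]) \<longrightarrow> Q ((xs@[b]) ! k) ((xs@[b]) ! Suc k)) \<longleftrightarrow>
    (\<forall>k. Suc k < length xs \<longrightarrow> Q (xs ! k) (xs ! Suc k)) \<and> Q (last xs) b"
  proof
  assume H: "\<forall>k. Suc k < length (xs@[b]) \<longrightarrow> Q ((xs@[b]) ! k) ((xs@[b]) ! Suc k)"
  show "(\<forall>k. Suc k < length xs \<longrightarrow> Q (xs ! k) (xs ! Suc k)) \<and> Q (last xs) b"
  proof
    show "\<forall>k. Suc k < length xs \<longrightarrow> Q (xs ! k) (xs ! Suc k)"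
      using H by (metis Suc_lessD length_append_singleton less_SucI nth_append_left)
    have "Q ((xs@[b]) ! (length xs - 1)) ((xs@[b]) ! Suc (length xs - 1))"
      using H[rule_format, of "length xs - 1"] assms by simp
    then show "Q (last xs) b" using assms
      by (simp add: last_conv_nth nth_append)
  qed
next
  assume H: "(\<forall>k. Suc k < length xs \<longrightarrow> Q (xs ! k) (xs ! Suc k)) \<and> Q (last xs) b"
  show "\<forall>k. Suc k < length (xs@[b]) \<longrightarrow> Q ((xs@[b]) ! k) ((xs@[b]) ! Suc k)"
  proof (intro allI impI)
    fix k assume k: "Suc k < length (xs@[b])"
    show "Q ((xs@[b]) ! k) ((xs@[b]) ! Suc k)"
    proof (cases "Suc k < length xs")
      case True then show ?thesis using H by (simp add: nth_append)
    next
      case False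
      then have "Suc k = length xs" using k by simp
      then have "k = length xs - 1" by simp
      then show ?thesis using H assms \<open>Suc k = length xs\<close> by (simp add: nth_append last_conv_nth)
    qed
  qed
qed

lemma gpath_snoc:
  assumes "xs \<noteq> []"
  shows "gpath u R (xs @ [b]) \<longleftrightarrow> gpath u R xs \<and> b \<in> configs \<and>
     (\<exists>i. unilateral i (last xs) b \<and> R (u i (last xs)) (u i b))"
proof -
  note A = steps_snoc[OF assms]
  show ?thesis unfolding gpath_def using A[where Q="\<lambda>a b. \<exists>i. unilateral i a b \<and> R (u i a) (u i b)"] assms
    by auto
qed

lemma mono_snoc:
  assumes "xs \<noteq> []"
  shows "monotone_path (xs @ [b]) \<longleftrightarrow> monotone_path xs \<and> last xs < b"
    and "antimonotone_path (xs @ [b]) \<longleftrightarrow> antimonotone_path xs \<and> last xs > b"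
  unfolding monotone_path_def antimonotone_path_def
  using steps_snoc[OF assms, where Q="\<lambda>a b. a < b"] steps_snoc[OF assms, where Q="\<lambda>a b. a > b"] by auto


inductive up for u R where
  up_refl: "x \<in> configs \<Longrightarrow> up u R x x"
| up_step: "up u R x y \<Longrightarrow> y i = -1 \<Longrightarrow> R (u i y) (u i (y(i:=1))) \<Longrightarrow> up u R x (y(i:=1))"

inductive down for u R where
  down_refl: "x \<in> configs \<Longrightarrow> down u R x x"
| down_step: "down u R x y \<Longrightarrow> y i = 1 \<Longrightarrow> R (u i y) (u i (y(i:=-1))) \<Longrightarrow> down u R x (y(i:=-1))"

inductive rc for u R where
  rc_refl: "x \<in> configs \<Longrightarrow> rc u R x x"
| rc_step: "rc u R x y \<Longrightarrow> z \<in> configs \<Longrightarrow> unilateral i y z \<Longrightarrow> R (u i y) (u i z) \<Longrightarrow> rc u R x z"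

lemma configs_upd: "y \<in> configs \<Longrightarrow> y(i:=1) \<in> configs" "y \<in> configs \<Longrightarrow> y(i:=-1) \<in> configs"
  by (auto simp: configs_def)

lemma configs_max: "y \<in> configs \<Longrightarrow> z \<in> configs \<Longrightarrow> (\<lambda>i. max (y i) (z i)) \<in> configs"
  and configs_min: "y \<in> configs \<Longrightarrow> z \<in> configs \<Longrightarrow> (\<lambda>i. min (y i) (z i)) \<in> configs"
  by (auto simp: configs_def max_def min_def)

lemma cb: "x \<in> configs \<Longrightarrow> x i \<le> 1" "x \<in> configs \<Longrightarrow> -1 \<le> x i"
  by (auto simp: configs_def dest: spec[of _ i])

lemma up_props: "up u R x y \<Longrightarrow> x \<in> configs \<and> y \<in> configs \<and> x \<le> y"
proof (induction rule: up.induct)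
  case (up_refl x) then show ?case by simp
next
  case (up_step x y i)
  have "y(i:=1) \<in> configs" using up_step.IH by (intro configs_upd(1)) simp
  moreover have "x \<le> y(i:=1)" unfolding le_fun_def
  proof
    fix j show "x j \<le> (y(i:=1)) j"
      using up_step cb(1)[of x j] by (cases "j = i") (auto simp: le_fun_def)
  qed
  ultimately show ?case using up_step by blast
qed

lemma down_props: "down u R x y \<Longrightarrow> x \<in> configs \<and> y \<in> configs \<and> y \<le> x"
proof (induction rule: down.induct)
  case (down_refl x) then show ?case by simp
next
  case (down_step x y i)
  have "y(i:=-1) \<in> configs" using down_step.IH by (intro configs_upd(2)) simp
  moreover have "y(i:=-1) \<le> x" unfolding le_fun_def
  proof
    fix j show "(y(i:=-1)) j \<le> x j"
      using down_step cb(2)[of x j] by (cases "j = i") (auto simp: le_fun_def)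
  qed
  ultimately show ?case using down_step by blast
qed

lemma rc_props: "rc u R x y \<Longrightarrow> x \<in> configs \<and> y \<in> configs"
  by (induction rule: rc.induct) auto

lemma unilateral_cases:
  assumes "y \<in> configs" "z \<in> configs" "unilateral i y z"
  shows "(y i = -1 \<and> z = y(i:=1)) \<or> (y i = 1 \<and> z = y(i:=-1))"
proof -
  have "y i \<in> {-1,1}" "z i \<in> {-1,1}" using assms(1,2) by (auto simp: configs_def)
  moreover have "\<forall>j. j \<noteq> i \<longrightarrow> z j = y j" "z i \<noteq> y i" using assms(3) by (auto simp: unilateral_def)
  ultimately show ?thesis by (auto simp: fun_eq_iff)
qed

lemma unilateral_upd: "y i = -1 \<Longrightarrow> unilateral i y (y(i:=1))" "y i = 1 \<Longrightarrow> unilateral i y (y(i:=-1))"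
  by (auto simp: unilateral_def)

lemma list_to_up: "gpath u R xs \<Longrightarrow> monotone_path xs \<Longrightarrow> up u R (hd xs) (last xs)"
proof (induction xs rule: rev_induct)
  case Nil then show ?case by (simp add: gpath_def)
next
  case (snoc b xs)
  show ?case
  proof (cases "xs = []")
    case True then show ?thesis using snoc.prems by (auto simp: gpath_def intro: up_refl)
  next
    case False
    from snoc.prems gpath_snoc[OF False] mono_snoc[OF False]
    obtain i where g: "gpath u R xs" "monotone_path xs" "b \<in> configs" "unilateral i (last xs) b"
      "R (u i (last xs)) (u i b)" "last xs < b" by auto
    have lc: "last xs \<in> configs" using g(1) False by (auto simp: gpath_def)
    have "last xs i = -1 \<and> b = (last xs)(i:=1)"
    proof -
      have "last xs i \<le> b i" using g(6) by (simp add: less_fun_def le_fun_def)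
      with unilateral_cases[OF lc g(3,4)] show ?thesis by auto
    qed
    then have e: "last xs i = -1" "b = (last xs)(i:=1)" by auto
    have "up u R (hd xs) ((last xs)(i:=1))"
    proof -
      have r: "R (u i (last xs)) (u i ((last xs)(i:=1)))" using g(5) e(2) by simp
      show ?thesis using up_step[of u R "hd xs" "last xs" i] snoc.IH[OF g(1,2)] e(1) r by blast
    qed
    moreover have "hd (xs@[b]) = hd xs" "last (xs@[b]) = b" using False by simp_all
    ultimately show ?thesis using e(2) by metis
  qed
qed

lemma list_to_down: "gpath u R xs \<Longrightarrow> antimonotone_path xs \<Longrightarrow> down u R (hd xs) (last xs)"
proof (induction xs rule: rev_induct)
  case Nil then show ?case by (simp add: gpath_def)
next
  case (snoc b xs)
  show ?case
  proof (cases "xs = []")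
    case True then show ?thesis using snoc.prems by (auto simp: gpath_def intro: down_refl)
  next
    case False
    from snoc.prems gpath_snoc[OF False] mono_snoc[OF False]
    obtain i where g: "gpath u R xs" "antimonotone_path xs" "b \<in> configs" "unilateral i (last xs) b"
      "R (u i (last xs)) (u i b)" "last xs > b" by auto
    have lc: "last xs \<in> configs" using g(1) False by (auto simp: gpath_def)
    have "last xs i = 1 \<and> b = (last xs)(i:=-1)"
    proof -
      have "last xs i \<ge> b i" using g(6) by (simp add: less_fun_def le_fun_def)
      with unilateral_cases[OF lc g(3,4)] show ?thesis by auto
    qed
    then have e: "last xs i = 1" "b = (last xs)(i:=-1)" by auto
    have "down u R (hd xs) ((last xs)(i:=-1))"
    proof -
      have r: "R (u i (last xs)) (u i ((last xs)(i:=-1)))" using g(5) e(2) by simp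
      show ?thesis using down_step[of u R "hd xs" "last xs" i] snoc.IH[OF g(1,2)] e(1) r by blast
    qed
    moreover have "hd (xs@[b]) = hd xs" "last (xs@[b]) = b" using False by simp_all
    ultimately show ?thesis using e(2) by metis
  qed
qed

lemma list_to_rc: "gpath u R xs \<Longrightarrow> rc u R (hd xs) (last xs)"
proof (induction xs rule: rev_induct)
  case Nil then show ?case by (simp add: gpath_def)
next
  case (snoc b xs)
  show ?case
  proof (cases "xs = []")
    case True then show ?thesis using snoc.prems by (auto simp: gpath_def intro: rc_refl)
  next
    case False
    from snoc.prems gpath_snoc[OF False]
    obtain i where g: "gpath u R xs" "b \<in> configs" "unilateral i (last xs) b"
      "R (u i (last xs)) (u i b)" by auto
    with rc_step[OF snoc.IH[OF g(1)] g(2,3,4)] False show ?thesis by simp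
  qed
qed

lemma up_to_list: "up u R x y \<Longrightarrow> \<exists>xs. gpath u R xs \<and> monotone_path xs \<and> hd xs = x \<and> last xs = y"
proof (induction rule: up.induct)
  case (up_refl x) then show ?case
    by (intro exI[of _ "[x]"]) (simp add: gpath_def monotone_path_def)
next
  case (up_step x y i)
  then obtain xs where xs: "gpath u R xs" "monotone_path xs" "hd xs = x" "last xs = y" by auto
  have ne: "xs \<noteq> []" using xs(1) by (simp add: gpath_def)
  have yc: "y \<in> configs" using xs ne by (auto simp: gpath_def)
  have lt: "y < y(i:=1)" using up_step.hyps(2)
    by (auto simp: less_fun_def le_fun_def fun_eq_iff dest: spec[of _ i])
  show ?case
  proof (intro exI conjI)
    have un: "unilateral i y (y(i:=1))" using up_step.hyps(2) by (rule unilateral_upd)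
    have cu: "y(i:=1) \<in> configs" using yc by (rule configs_upd)
    show "gpath u R (xs @ [y(i:=1)])"
      unfolding gpath_snoc[OF ne] xs(4)
      using xs(1) up_step.hyps(3) cu un by metis
    show "monotone_path (xs @ [y(i:=1)])" unfolding mono_snoc(1)[OF ne] using xs lt by simp
    show "hd (xs @ [y(i:=1)]) = x" using xs ne by simp
    show "last (xs @ [y(i:=1)]) = y(i:=1)" by simp
  qed
qed

lemma down_to_list: "down u R x y \<Longrightarrow> \<exists>xs. gpath u R xs \<and> antimonotone_path xs \<and> hd xs = x \<and> last xs = y"
proof (induction rule: down.induct)
  case (down_refl x) then show ?case
    by (intro exI[of _ "[x]"]) (simp add: gpath_def antimonotone_path_def)
next
  case (down_step x y i)
  then obtain xs where xs: "gpath u R xs" "antimonotone_path xs" "hd xs = x" "last xs = y" by auto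
  have ne: "xs \<noteq> []" using xs(1) by (simp add: gpath_def)
  have yc: "y \<in> configs" using xs ne by (auto simp: gpath_def)
  have lt: "y > y(i:=-1)" using down_step.hyps(2)
    by (auto simp: less_fun_def le_fun_def fun_eq_iff dest: spec[of _ i])
  show ?case
  proof (intro exI conjI)
    have un: "unilateral i y (y(i:=-1))" using down_step.hyps(2) by (rule unilateral_upd)
    have cu: "y(i:=-1) \<in> configs" using yc by (rule configs_upd)
    show "gpath u R (xs @ [y(i:=-1)])"
      unfolding gpath_snoc[OF ne] xs(4)
      using xs(1) down_step.hyps(3) cu un by metis
    show "antimonotone_path (xs @ [y(i:=-1)])" unfolding mono_snoc(2)[OF ne] using xs lt by simp
    show "hd (xs @ [y(i:=-1)]) = x" using xs ne by simp
    show "last (xs @ [y(i:=-1)]) = y(i:=-1)" by simp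
  qed
qed


definition Rmono :: "(real \<Rightarrow> real \<Rightarrow> bool) \<Rightarrow> bool" where
  "Rmono R \<longleftrightarrow> (\<forall>a b c d. R a b \<longrightarrow> b - a \<le> d - c \<longrightarrow> R c d)"

lemma sm_up:
  assumes sm: "supermodular u" and RM: "Rmono R"
    and wc: "w \<in> configs" and yc: "y \<in> configs" and le: "y \<le> w"
    and yi: "y i = -1" and wi: "w i = -1" and r: "R (u i y) (u i (y(i:=1)))"
  shows "R (u i w) (u i (w(i:=1)))"
proof -
  have "\<forall>j. j \<noteq> i \<longrightarrow> y j \<le> w j" using le by (simp add: le_fun_def)
  then have "u i (w(i := 1)) - u i (w(i := -1)) \<ge> u i (y(i := 1)) - u i (y(i := -1))"
    using sm wc yc unfolding supermodular_def by blast
  moreover have "w(i := -1) = w" "y(i := -1) = y" using yi wi by (simp_all add: fun_eq_iff)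
  ultimately have "u i (w(i := 1)) - u i w \<ge> u i (y(i := 1)) - u i y" by simp
  then show ?thesis using RM r unfolding Rmono_def by blast
qed

lemma sm_down:
  assumes sm: "supermodular u" and RM: "Rmono R"
    and wc: "w \<in> configs" and yc: "y \<in> configs" and le: "w \<le> y"
    and yi: "y i = 1" and wi: "w i = 1" and r: "R (u i y) (u i (y(i:=-1)))"
  shows "R (u i w) (u i (w(i:=-1)))"
proof -
  have "\<forall>j. j \<noteq> i \<longrightarrow> w j \<le> y j" using le by (simp add: le_fun_def)
  then have "u i (y(i := 1)) - u i (y(i := -1)) \<ge> u i (w(i := 1)) - u i (w(i := -1))"
    using sm wc yc unfolding supermodular_def by blast
  moreover have "w(i := 1) = w" "y(i := 1) = y" using yi wi by (simp_all add: fun_eq_iff)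
  ultimately have "u i (w(i := -1)) - u i w \<ge> u i (y(i := -1)) - u i y" by simp
  then show ?thesis using RM r unfolding Rmono_def by blast
qed

lemma up_trans: "up u R y z \<Longrightarrow> up u R x y \<Longrightarrow> up u R x z"
proof (induction rule: up.induct)
  case (up_refl x) then show ?case by simp
next
  case (up_step y' z i)
  have "up u R x z" using up_step.IH up_step.prems by simp
  then show ?case by (rule up.up_step[of u R x z i, OF _ up_step.hyps(2,3)])
qed

lemma down_trans: "down u R y z \<Longrightarrow> down u R x y \<Longrightarrow> down u R x z"
proof (induction rule: down.induct)
  case (down_refl x) then show ?case by simp
next
  case (down_step y' z i)
  have "down u R x z" using down_step.IH down_step.prems by simp
  then show ?case by (rule down.down_step[of u R x z i, OF _ down_step.hyps(2,3)])
qed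

lemma cfg_cases: "x \<in> configs \<Longrightarrow> x i = -1 \<or> x i = 1"
  by (simp add: configs_def)

lemma up_join:
  assumes sm: "supermodular u" and RM: "Rmono R"
  shows "up u R x y \<Longrightarrow> x' \<in> configs \<Longrightarrow> x \<le> x' \<Longrightarrow> up u R x' (\<lambda>j. max (y j) (x' j))"
proof (induction rule: up.induct)
  case (up_refl x)
  have "(\<lambda>j. max (x j) (x' j)) = x'"
  proof (rule ext)
    fix j have "x j \<le> x' j" using up_refl.prems(2) by (simp add: le_fun_def)
    then show "max (x j) (x' j) = x' j" by simp
  qed
  then show ?case using up.up_refl[OF up_refl.prems(1)] by simp
next
  case (up_step x y i)
  define M where "M = (\<lambda>j. max (y j) (x' j))"
  have IH: "up u R x' M" using up_step M_def by simp
  have yc: "y \<in> configs" using up_props[OF up_step.hyps(1)] by simp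
  have Mc: "M \<in> configs" unfolding M_def using yc up_step.prems(1) by (rule configs_max)
  have yM: "y \<le> M" unfolding M_def by (simp add: le_fun_def)
  show ?case
  proof (cases "x' i = 1")
    case True
    have "(\<lambda>j. max ((y(i:=1)) j) (x' j)) = M" using True cb[OF yc, of i] by (simp add: M_def fun_eq_iff)
    then show ?thesis using IH by simp
  next
    case False
    then have x'i: "x' i = -1" using cfg_cases[OF up_step.prems(1), of i] by simp
    have Mi: "M i = -1" using x'i up_step.hyps(2) by (simp add: M_def)
    have r: "R (u i M) (u i (M(i:=1)))"
      by (rule sm_up[where w=M and y=y and i=i, OF sm RM Mc yc yM up_step.hyps(2) Mi up_step.hyps(3)])
    have "up u R x' (M(i:=1))" by (rule up.up_step[of u R x' M i, OF IH Mi r])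
    moreover have "M(i:=1) = (\<lambda>j. max ((y(i:=1)) j) (x' j))"
      using cb[OF up_step.prems(1), of i] by (simp add: M_def fun_eq_iff)
    ultimately show ?thesis by simp
  qed
qed

lemma down_meet:
  assumes sm: "supermodular u" and RM: "Rmono R"
  shows "down u R x y \<Longrightarrow> x' \<in> configs \<Longrightarrow> x' \<le> x \<Longrightarrow> down u R x' (\<lambda>j. min (y j) (x' j))"
proof (induction rule: down.induct)
  case (down_refl x)
  have "(\<lambda>j. min (x j) (x' j)) = x'"
  proof (rule ext)
    fix j have "x' j \<le> x j" using down_refl.prems(2) by (simp add: le_fun_def)
    then show "min (x j) (x' j) = x' j" by simp
  qed
  then show ?case using down.down_refl[OF down_refl.prems(1)] by simp
next
  case (down_step x y i)
  define M where "M = (\<lambda>j. min (y j) (x' j))"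
  have IH: "down u R x' M" using down_step M_def by simp
  have yc: "y \<in> configs" using down_props[OF down_step.hyps(1)] by simp
  have Mc: "M \<in> configs" unfolding M_def using yc down_step.prems(1) by (rule configs_min)
  have yM: "M \<le> y" unfolding M_def by (simp add: le_fun_def)
  show ?case
  proof (cases "x' i = -1")
    case True
    have "(\<lambda>j. min ((y(i:=-1)) j) (x' j)) = M" using True cb[OF yc, of i] by (simp add: M_def fun_eq_iff)
    then show ?thesis using IH by simp
  next
    case False
    then have x'i: "x' i = 1" using cfg_cases[OF down_step.prems(1), of i] by simp
    have Mi: "M i = 1" using x'i down_step.hyps(2) by (simp add: M_def)
    have r: "R (u i M) (u i (M(i:=-1)))"
      by (rule sm_down[where w=M and y=y and i=i, OF sm RM Mc yc yM down_step.hyps(2) Mi down_step.hyps(3)])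
    have "down u R x' (M(i:=-1))" by (rule down.down_step[of u R x' M i, OF IH Mi r])
    moreover have "M(i:=-1) = (\<lambda>j. min ((y(i:=-1)) j) (x' j))"
      using cb[OF down_step.prems(1), of i] by (simp add: M_def fun_eq_iff)
    ultimately show ?thesis by simp
  qed
qed

lemma rc_up:
  assumes sm: "supermodular u" and RM: "Rmono R"
  shows "rc u R x y \<Longrightarrow> \<exists>y'. up u R x y' \<and> y \<le> y'"
proof (induction rule: rc.induct)
  case (rc_refl x) then show ?case using up.up_refl by blast
next
  case (rc_step x w z i)
  obtain w' where w': "up u R x w'" "w \<le> w'" using rc_step.IH by blast
  have wc: "w \<in> configs" using rc_props[OF rc_step.hyps(1)] by simp
  have w'c: "w' \<in> configs" using up_props[OF w'(1)] by simp
  from unilateral_cases[OF wc rc_step.hyps(2,3)]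
  show ?case
  proof
    assume h: "w i = 1 \<and> z = w(i := -1)"
    have "z \<le> w" using h by (simp add: le_fun_def)
    then show ?thesis using w' order_trans by blast
  next
    assume h: "w i = -1 \<and> z = w(i := 1)"
    show ?thesis
    proof (cases "w' i = 1")
      case True
      have "z \<le> w'" using h True w'(2) by (simp add: le_fun_def)
      then show ?thesis using w'(1) by blast
    next
      case False
      then have w'i: "w' i = -1" using cfg_cases[OF w'c, of i] by simp
      have r0: "R (u i w) (u i (w(i:=1)))" using rc_step.hyps(4) h by simp
      have r: "R (u i w') (u i (w'(i:=1)))"
        using h by (intro sm_up[where w=w' and y=w and i=i, OF sm RM w'c wc w'(2) _ w'i r0]) simp
      have "up u R x (w'(i:=1))" by (rule up.up_step[of u R x w' i, OF w'(1) w'i r])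
      moreover have "z \<le> w'(i:=1)" using h w'(2) by (simp add: le_fun_def)
      ultimately show ?thesis by blast
    qed
  qed
qed

lemma rc_down:
  assumes sm: "supermodular u" and RM: "Rmono R"
  shows "rc u R x y \<Longrightarrow> \<exists>y'. down u R x y' \<and> y' \<le> y"
proof (induction rule: rc.induct)
  case (rc_refl x) then show ?case using down.down_refl by blast
next
  case (rc_step x w z i)
  obtain w' where w': "down u R x w'" "w' \<le> w" using rc_step.IH by blast
  have wc: "w \<in> configs" using rc_props[OF rc_step.hyps(1)] by simp
  have w'c: "w' \<in> configs" using down_props[OF w'(1)] by simp
  from unilateral_cases[OF wc rc_step.hyps(2,3)]
  show ?case
  proof
    assume h: "w i = -1 \<and> z = w(i := 1)"
    have "w \<le> z" using h by (simp add: le_fun_def)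
    then show ?thesis using w' order_trans by blast
  next
    assume h: "w i = 1 \<and> z = w(i := -1)"
    show ?thesis
    proof (cases "w' i = -1")
      case True
      have "w' \<le> z" using h True w'(2) by (simp add: le_fun_def)
      then show ?thesis using w'(1) by blast
    next
      case False
      then have w'i: "w' i = 1" using cfg_cases[OF w'c, of i] by simp
      have r0: "R (u i w) (u i (w(i:=-1)))" using rc_step.hyps(4) h by simp
      have r: "R (u i w') (u i (w'(i:=-1)))"
        using h by (intro sm_down[where w=w' and y=w and i=i, OF sm RM w'c wc w'(2) _ w'i r0]) simp
      have "down u R x (w'(i:=-1))" by (rule down.down_step[of u R x w' i, OF w'(1) w'i r])
      moreover have "w'(i:=-1) \<le> z" using h w'(2) by (simp add: le_fun_def)
      ultimately show ?thesis by blast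
    qed
  qed
qed


lemma Rmono_less: "Rmono (<)" and Rmono_le: "Rmono (\<le>)"
  by (auto simp: Rmono_def)

lemma conv:
  shows "reach_up (gpath u R) x y \<longleftrightarrow> up u R x y"
    and "reach_down (gpath u R) x y \<longleftrightarrow> down u R x y"
    and "reach (gpath u R) x y \<Longrightarrow> rc u R x y"
proof -
  show "reach_up (gpath u R) x y \<longleftrightarrow> up u R x y"
  proof
    assume "reach_up (gpath u R) x y"
    then obtain xs where "gpath u R xs" "monotone_path xs" "hd xs = x" "last xs = y"
      unfolding reach_up_def by blast
    then show "up u R x y" using list_to_up by blast
  next
    assume "up u R x y"
    then show "reach_up (gpath u R) x y" unfolding reach_up_def using up_to_list by blast
  qed
  show "reach_down (gpath u R) x y \<longleftrightarrow> down u R x y"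
  proof
    assume "reach_down (gpath u R) x y"
    then obtain xs where "gpath u R xs" "antimonotone_path xs" "hd xs = x" "last xs = y"
      unfolding reach_down_def by blast
    then show "down u R x y" using list_to_down by blast
  next
    assume "down u R x y"
    then show "reach_down (gpath u R) x y" unfolding reach_down_def using down_to_list by blast
  qed
  assume "reach (gpath u R) x y"
  then obtain xs where "gpath u R xs" "hd xs = x" "last xs = y"
    unfolding reach_def by blast
  then show "rc u R x y" using list_to_rc by blast
qed

theorem lemma5:
  fixes u :: "'v::finite \<Rightarrow> ('v \<Rightarrow> int) \<Rightarrow> real"
    and P :: "('v \<Rightarrow> int) list \<Rightarrow> bool"
  assumes "supermodular u"
    and "P = I_path u \<or> P = BR_path u"
  shows "\<forall>x\<in>configs. \<forall>x'\<in>configs. \<forall>y\<in>configs. \<forall>z\<in>configs.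
      (reach_up P x y \<and> reach_up P x z \<longrightarrow> reach_up P x (\<lambda>i. max (y i) (z i))) \<and>
      (reach_down P x y \<and> reach_down P x z \<longrightarrow> reach_down P x (\<lambda>i. min (y i) (z i))) \<and>
      (reach_up P x y \<and> x' \<ge> x \<longrightarrow> reach_up P x' (\<lambda>i. max (y i) (x' i))) \<and>
      (reach_down P x y \<and> x' \<le> x \<longrightarrow> reach_down P x' (\<lambda>i. min (y i) (x' i))) \<and>
      (reach P x y \<longrightarrow> (\<exists>y'\<in>configs. \<exists>y''\<in>configs.
          y'' \<le> y \<and> y \<le> y' \<and> reach_up P x y' \<and> reach_down P x y''))"
proof -
  note sm = assms(1)
  obtain R where PR: "P = gpath u R" and RM: "Rmono R"
    using assms(2) I_gpath BR_gpath Rmono_less Rmono_le by metis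
  show ?thesis
  proof (intro ballI conjI impI)
    fix x x' y z :: "'v \<Rightarrow> int"
    assume xc: "x \<in> configs" and x'c: "x' \<in> configs" and yc: "y \<in> configs" and zc: "z \<in> configs"
    {
      assume h: "reach_up P x y \<and> reach_up P x z"
      then have uy: "up u R x y" and uz: "up u R x z" using PR conv(1) by auto
      have "x \<le> y" using up_props[OF uy] by simp
      then have "up u R y (\<lambda>j. max (z j) (y j))" using up_join[OF sm RM uz yc] by simp
      then have "up u R x (\<lambda>j. max (z j) (y j))" using up_trans uy by blast
      moreover have "(\<lambda>j. max (z j) (y j)) = (\<lambda>j. max (y j) (z j))" by (simp add: max.commute)
      ultimately show "reach_up P x (\<lambda>i. max (y i) (z i))" unfolding PR conv(1) by simp
    next
      assume h: "reach_down P x y \<and> reach_down P x z"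
      then have uy: "down u R x y" and uz: "down u R x z" using PR conv(2) by auto
      have "y \<le> x" using down_props[OF uy] by simp
      then have "down u R y (\<lambda>j. min (z j) (y j))" using down_meet[OF sm RM uz yc] by simp
      then have "down u R x (\<lambda>j. min (z j) (y j))" using down_trans uy by blast
      moreover have "(\<lambda>j. min (z j) (y j)) = (\<lambda>j. min (y j) (z j))" by (simp add: min.commute)
      ultimately show "reach_down P x (\<lambda>i. min (y i) (z i))" unfolding PR conv(2) by simp
    next
      assume h: "reach_up P x y \<and> x' \<ge> x"
      then have uy: "up u R x y" using PR conv(1) by auto
      have "up u R x' (\<lambda>j. max (y j) (x' j))" using up_join[OF sm RM uy x'c] h by simp
      then show "reach_up P x' (\<lambda>i. max (y i) (x' i))" unfolding PR conv(1) by simp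
    next
      assume h: "reach_down P x y \<and> x' \<le> x"
      then have uy: "down u R x y" using PR conv(2) by auto
      have "down u R x' (\<lambda>j. min (y j) (x' j))" using down_meet[OF sm RM uy x'c] h by simp
      then show "reach_down P x' (\<lambda>i. min (y i) (x' i))" unfolding PR conv(2) by simp
    next
      assume h: "reach P x y"
      then have r: "rc u R x y" using PR conv(3) by simp
      obtain y' where y': "up u R x y'" "y \<le> y'" using rc_up[OF sm RM r] by blast
      obtain y'' where y'': "down u R x y''" "y'' \<le> y" using rc_down[OF sm RM r] by blast
      have "y' \<in> configs" using up_props[OF y'(1)] by simp
      moreover have "y'' \<in> configs" using down_props[OF y''(1)] by simp
      moreover have "reach_up P x y'" "reach_down P x y''" unfolding PR conv(1,2) using y'(1) y''(1) by simp_all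
      ultimately show "\<exists>y'\<in>configs. \<exists>y''\<in>configs.
          y'' \<le> y \<and> y \<le> y' \<and> reach_up P x y' \<and> reach_down P x y''"
        using y'(2) y''(2) by blast
    }
  qed
qed

end
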